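(* Let $\rho_b<\rho_h$ with $\rho_b+\rho_h\le1$, and let $(\eta^0_x)_{x\in\mathbb{Z}}$ be i.i.d. with $\mathbb{P}(\eta^0_x=1)=\rho_b$, $\mathbb{P}(\eta^0_x=-1)=\rho_h$, $\mathbb{P}(\eta^0_x=0)=1-\rho_b-\rho_h$. Then almost surely there are infinitely many separators on the right of $0$ and infinitely many on the left of $0$.
   Context: A vertex $v\in\mathbb{Z}$ is a separator for $\eta^0$ if $\eta^0_v=-1$, $\sum_{j=k}^{v-1}\eta^0_j\le0$ for all $k<v$, and $\sum_{j=v+1}^{k}\eta^0_j\le0$ for all $k>v$. (State $1$ = ball, $-1$ = hole, $0$ = neutral.) *)

theory Defs
  imports "HOL-Probability.Probability"
begin

text \<open>States: 1 = ball, -1 = hole, 0 = neutral.  A vertex v is a separator for eta if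
  eta v = -1, all partial sums ending at v-1 are \<le> 0 and all partial sums starting
  at v+1 are \<le> 0.\<close>
definition separator :: "(int \<Rightarrow> int) \<Rightarrow> int \<Rightarrow> bool" where
  "separator eta v \<longleftrightarrow>
     eta v = -1 \<and>
     (\<forall>k<v. (\<Sum>j=k..v-1. eta j) \<le> 0) \<and>
     (\<forall>k>v. (\<Sum>j=v+1..k. eta j) \<le> 0)"

end

theory Submission
  imports Defs "HOL-Library.Nat_Bijection"
begin


lemma int_sum_meas:
  assumes "\<And>i. X i \<in> measurable Mg (count_space UNIV)"
  shows "(\<lambda>w. \<Sum>i\<in>I. (X i w :: int)) \<in> measurable Mg (count_space UNIV)"
proof -
  note assms[measurable]
  have [measurable]: "(\<lambda>w. real_of_int (X i w)) \<in> borel_measurable Mg" for i by measurable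
  have "(\<lambda>w. floor (\<Sum>i\<in>I. real_of_int (X i w))) \<in> measurable Mg (count_space UNIV)" by measurable
  moreover have "(\<lambda>w. floor (\<Sum>i\<in>I. real_of_int (X i w))) = (\<lambda>w. \<Sum>i\<in>I. (X i w :: int))"
    by (metis floor_of_int of_int_sum)
  ultimately show ?thesis by simp
qed

lemma sum_split_int:
  fixes f :: "int \<Rightarrow> 'a::comm_monoid_add"
  assumes "a \<le> m + 1" "m \<le> b"
  shows "(\<Sum>j=a..b. f j) = (\<Sum>j=a..m. f j) + (\<Sum>j=m+1..b. f j)"
proof -
  have "{a..b} = {a..m} \<union> {m+1..b}" using assms by auto
  then show ?thesis by (simp add: sum.union_disjoint)
qed

lemma sum_const_m1:
  fixes f :: "int \<Rightarrow> int"
  assumes "\<forall>j\<in>{a..b}. f j = -1" "a \<le> b + 1"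
  shows "(\<Sum>j=a..b. f j) = a - b - 1"
proof -
  have "(\<Sum>j=a..b. f j) = (\<Sum>j=a..b. -1)" using assms by (intro sum.cong) auto
  also have "\<dots> = a - b - 1" using assms by simp
  finally show ?thesis .
qed

locale sepsetup = prob_space M for M :: "'w measure" +
  fixes eta :: "int \<Rightarrow> 'w \<Rightarrow> int" and rb rh :: real
  assumes lt: "rb < rh" and le1: "rb + rh \<le> 1"
  and ind: "indep_vars (\<lambda>_. count_space UNIV) eta UNIV"
  and p1: "\<And>x. prob {w \<in> space M. eta x w = 1} = rb"
  and pm1: "\<And>x. prob {w \<in> space M. eta x w = -1} = rh"
  and p0: "\<And>x. prob {w \<in> space M. eta x w = 0} = 1 - rb - rh"
begin

lemma eta_meas[measurable]: "eta j \<in> measurable M (count_space UNIV)"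
  using ind unfolding indep_vars_def2 by auto

lemma eta_sum_meas[measurable]: "(\<lambda>w. \<Sum>i\<in>I. eta i w) \<in> measurable M (count_space UNIV)"
  by (rule int_sum_meas[OF eta_meas])

lemma "{w \<in> space M. (\<Sum>i\<in>I. eta i w) > int N \<and> (\<forall>k<v. (\<Sum>j=k..v-1. eta j w) \<le> 0)} \<in> sets M"
  by measurable

lemma eta_real_meas[measurable]: "(\<lambda>w. real_of_int (eta j w)) \<in> borel_measurable M"
  by measurable

lemma eta_set[measurable]: "{w \<in> space M. eta k w = c} \<in> sets M"
  by measurable

lemma ind_int: "integrable M (\<lambda>w. indicat_real {w \<in> space M. eta k w = c} w)"
  by (rule integrable_real_indicator) (auto simp: less_top[symmetric])

lemma rb_nonneg: "0 \<le> rb" using p1[of 0] by (metis measure_nonneg)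
lemma rh_pos: "0 < rh" using rb_nonneg lt by linarith

lemma ae_vals: "AE w in M. \<forall>j. eta j w \<in> {-1,0,1}"
proof -
  have "AE w in M. eta j w \<in> {-1,0,1}" for j
  proof -
    have e: "{w \<in> space M. eta j w \<in> {-1,0,1}} = 
       {w \<in> space M. eta j w = -1} \<union> ({w \<in> space M. eta j w = 0} \<union> {w \<in> space M. eta j w = 1})"
      by auto
    have "prob {w \<in> space M. eta j w \<in> {-1,0,1}} = rh + ((1 - rb - rh) + rb)"
      unfolding e
      by (subst finite_measure_Union, (auto)[3], subst finite_measure_Union, auto simp: p1 pm1 p0)
    then have "prob {w \<in> space M. eta j w \<in> {-1,0,1}} = 1" by simp
    from AE_prob_1[OF this] show ?thesis by auto
  qed
  then show ?thesis by (simp add: AE_all_countable)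
qed

definition lam :: real where "lam = 2 * rh / (rb + rh)"
definition ff :: real where "ff = rb * lam + rh / lam + (1 - rb - rh)"

lemma lam_gt1: "1 < lam"
  unfolding lam_def using lt rb_nonneg by (simp add: field_simps)

lemma rh_lam: "rh / lam = (rb + rh) / 2"
  unfolding lam_def using lt rb_nonneg rh_pos by (simp add: field_simps)

lemma ff_pos: "0 < ff"
proof -
  have "0 < rh / lam" using rh_pos lam_gt1 by simp
  moreover have "0 \<le> rb * lam" using rb_nonneg lam_gt1 by simp
  ultimately show ?thesis unfolding ff_def using le1 by linarith
qed

lemma ff_lt1: "ff < 1"
proof -
  have "ff - 1 = (lam - 1) * (rb - rh / lam)"
    unfolding ff_def using lam_gt1 by (simp add: field_simps)
  also have "\<dots> = (lam - 1) * ((rb - rh)/2)" by (simp add: rh_lam field_simps)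
  also have "\<dots> < 0" using lam_gt1 lt by (simp add: mult_pos_neg)
  finally show ?thesis by simp
qed

definition hh :: "int \<Rightarrow> real" where
  "hh x = (if x = 1 then lam else if x = -1 then 1/lam else if x = 0 then 1 else 0)"

definition HH :: "int set \<Rightarrow> int \<Rightarrow> int \<Rightarrow> real" where
  "HH J k x = (if k \<in> J then (if x = -1 then 1 else 0) else hh x)"

lemma inv_lam: "1/lam \<le> lam"
proof -
  have "1/lam < 1" using lam_gt1 by simp
  then show ?thesis using lam_gt1 by linarith
qed

lemma HH_bound: "\<bar>HH J k x\<bar> \<le> lam"
  using lam_gt1 inv_lam unfolding HH_def hh_def by auto

lemma int_hh: "(\<integral>w. hh (eta k w) \<partial>M) = ff"
proof -
  have "(\<integral>w. hh (eta k w) \<partial>M) = (\<integral>w. lam * indicator {w \<in> space M. eta k w = 1} w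
        + (1/lam) * indicator {w \<in> space M. eta k w = -1} w + indicator {w \<in> space M. eta k w = 0} w \<partial>M)"
    by (rule Bochner_Integration.integral_cong) (auto simp: hh_def indicator_def)
  also have "\<dots> = (\<integral>w. lam * indicator {w \<in> space M. eta k w = 1} w
        + (1/lam) * indicator {w \<in> space M. eta k w = -1} w \<partial>M) + (\<integral>w. indicator {w \<in> space M. eta k w = 0} w \<partial>M)"
    by (rule Bochner_Integration.integral_add) (auto intro!: Bochner_Integration.integrable_add simp: ind_int)
  also have "(\<integral>w. lam * indicator {w \<in> space M. eta k w = 1} w
        + (1/lam) * indicator {w \<in> space M. eta k w = -1} w \<partial>M) = 
      (\<integral>w. lam * indicator {w \<in> space M. eta k w = 1} w \<partial>M) + (\<integral>w. (1/lam) * indicator {w \<in> space M. eta k w = -1} w \<partial>M)"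
    by (rule Bochner_Integration.integral_add) (use ind_int[of k 1] ind_int[of k "-1"] in auto)
  also have "\<dots> = lam * rb + (1/lam) * rh"
    by (simp add: p1 pm1 integral_indicator Int_absorb2)
  also have "(\<integral>w. indicator {w \<in> space M. eta k w = 0} w \<partial>M) = 1 - rb - rh"
    by (simp add: p0 integral_indicator Int_absorb2)
  finally show ?thesis unfolding ff_def by (simp add: field_simps)
qed

lemma int_ind: "(\<integral>w. (if eta k w = -1 then 1 else 0) \<partial>M) = rh"
proof -
  have "(\<integral>w. (if eta k w = -1 then 1 else 0) \<partial>M) = (\<integral>w. indicator {w \<in> space M. eta k w = -1} w \<partial>M)"
    by (rule Bochner_Integration.integral_cong) (auto simp: indicator_def)
  also have "\<dots> = rh" by (simp add: pm1 integral_indicator Int_absorb2)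
  finally show ?thesis .
qed

lemma HH_meas[measurable]: "(\<lambda>w. HH J k (eta k w)) \<in> borel_measurable M"
proof -
  have "HH J k \<in> measurable (count_space UNIV) borel" by (simp add: measurable_count_space_eq1)
  then show ?thesis by measurable
qed

lemma prod_expect:
  assumes "finite J" "finite I" "I \<inter> J = {}"
  shows "(\<integral>w. (\<Prod>k\<in>J \<union> I. HH J k (eta k w)) \<partial>M) = rh ^ card J * ff ^ card I"
    and "integrable M (\<lambda>w. (\<Prod>k\<in>J \<union> I. HH J k (eta k w)))"
proof -
  have indep: "indep_vars (\<lambda>_. borel) (\<lambda>k w. HH J k (eta k w)) (J \<union> I)"
    by (rule indep_vars_compose2[OF indep_vars_subset[OF ind]]) (auto simp: measurable_count_space_eq1)
  have intg: "integrable M (\<lambda>w. HH J k (eta k w))" for k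
    by (rule integrable_const_bound[where B=lam]) (auto simp: HH_bound)
  have "(\<integral>w. (\<Prod>k\<in>J \<union> I. HH J k (eta k w)) \<partial>M) = (\<Prod>k\<in>J \<union> I. \<integral>w. HH J k (eta k w) \<partial>M)"
    by (rule indep_vars_lebesgue_integral[OF _ indep intg]) (use assms in auto)
  also have "\<dots> = (\<Prod>k\<in>J. \<integral>w. HH J k (eta k w) \<partial>M) * (\<Prod>k\<in>I. \<integral>w. HH J k (eta k w) \<partial>M)"
    by (rule prod.union_disjoint) (use assms in auto)
  also have "(\<Prod>k\<in>J. \<integral>w. HH J k (eta k w) \<partial>M) = (\<Prod>k\<in>J. rh)"
    by (rule prod.cong) (auto simp: HH_def int_ind)
  also have "(\<Prod>k\<in>I. \<integral>w. HH J k (eta k w) \<partial>M) = (\<Prod>k\<in>I. ff)"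
  proof (rule prod.cong)
    fix k assume "k \<in> I"
    then have "k \<notin> J" using assms by auto
    then show "(\<integral>w. HH J k (eta k w) \<partial>M) = ff" by (simp add: HH_def int_hh)
  qed simp
  finally show "(\<integral>w. (\<Prod>k\<in>J \<union> I. HH J k (eta k w)) \<partial>M) = rh ^ card J * ff ^ card I" by simp
  show "integrable M (\<lambda>w. (\<Prod>k\<in>J \<union> I. HH J k (eta k w)))"
    by (rule indep_vars_integrable[OF _ indep intg]) (use assms in auto)
qed

lemma hh_powr: "x \<in> {-1,0,1} \<Longrightarrow> hh x = lam powr (real_of_int x)"
  using lam_gt1 by (auto simp: hh_def powr_minus_divide)

lemma HH_nonneg: "0 \<le> HH J k x"
  using lam_gt1 unfolding HH_def hh_def by auto

lemma key:
  fixes N :: nat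
  assumes "finite J" "finite I" "I \<inter> J = {}"
  shows "prob {w \<in> space M. (\<forall>j\<in>J. eta j w = -1) \<and> (\<Sum>i\<in>I. eta i w) > int N}
         \<le> rh ^ card J * ff ^ card I / lam ^ N"
proof -
  let ?S = "{w \<in> space M. (\<forall>j\<in>J. eta j w = -1) \<and> (\<Sum>i\<in>I. eta i w) > int N}"
  let ?g = "\<lambda>w. (\<Prod>k\<in>J \<union> I. HH J k (eta k w))"
  have Smeas: "?S \<in> sets M" using assms by measurable
  have lamN: "0 < lam ^ N" using lam_gt1 by simp
  have "AE w in M. indicator ?S w \<le> ?g w / lam ^ N"
    using ae_vals
  proof eventually_elim
    case (elim w)
    have gsplit: "?g w = (\<Prod>k\<in>J. HH J k (eta k w)) * (\<Prod>k\<in>I. HH J k (eta k w))"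
      by (rule prod.union_disjoint) (use assms in auto)
    have gnn: "0 \<le> ?g w" by (intro prod_nonneg) (simp add: HH_nonneg)
    show ?case
    proof (cases "w \<in> ?S")
      case True
      then have J1: "(\<Prod>k\<in>J. HH J k (eta k w)) = 1" by (auto simp: HH_def intro!: prod.neutral)
      have "(\<Prod>k\<in>I. HH J k (eta k w)) = (\<Prod>k\<in>I. lam powr real_of_int (eta k w))"
      proof (rule prod.cong)
        fix k assume "k \<in> I"
        then have "k \<notin> J" using assms by auto
        then show "HH J k (eta k w) = lam powr real_of_int (eta k w)"
          using elim hh_powr[of "eta k w"] by (simp add: HH_def)
      qed simp
      also have "\<dots> = lam powr real_of_int (\<Sum>i\<in>I. eta i w)"
        using lam_gt1 by (simp add: powr_sum)
      also have "\<dots> \<ge> lam powr real N"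
      proof -
        have "int N \<le> (\<Sum>i\<in>I. eta i w)" using True by auto
        then have "real N \<le> real_of_int (\<Sum>i\<in>I. eta i w)" by (metis of_int_le_iff of_int_of_nat_eq)
        then show ?thesis using lam_gt1 by (intro powr_mono) auto
      qed
      finally have "lam ^ N \<le> ?g w" using gsplit J1 lam_gt1 by (simp add: powr_realpow)
      then show ?thesis using True lamN by simp
    next
      case False
      then show ?thesis using gnn lamN by simp
    qed
  qed
  then have "(\<integral>w. indicator ?S w \<partial>M) \<le> (\<integral>w. ?g w / lam ^ N \<partial>M)"
    by (intro integral_mono_AE) (use prod_expect(2)[OF assms] Smeas in \<open>auto intro!: integrable_real_indicator simp: less_top[symmetric]\<close>)
  also have "\<dots> = rh ^ card J * ff ^ card I / lam ^ N"
    using prod_expect(1)[OF assms] by simp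
  finally show ?thesis using Smeas by (simp add: integral_indicator Int_absorb2)
qed

lemma sep_meas[measurable]: "{w \<in> space M. separator (\<lambda>j. eta j w) v} \<in> sets M"
  unfolding separator_def by measurable

lemma probB:
  assumes "finite J"
  shows "prob {w \<in> space M. \<forall>j\<in>J. eta j w = -1} = rh ^ card J"
proof -
  let ?B = "{w \<in> space M. \<forall>j\<in>J. eta j w = -1}"
  have "prob ?B = (\<integral>w. indicator ?B w \<partial>M)"
    by (simp add: integral_indicator Int_absorb2)
  also have "\<dots> = (\<integral>w. (\<Prod>k\<in>J \<union> {}. HH J k (eta k w)) \<partial>M)"
  proof (rule Bochner_Integration.integral_cong)
    fix w assume w: "w \<in> space M"
    show "indicator ?B w = (\<Prod>k\<in>J \<union> {}. HH J k (eta k w))"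
    proof (cases "w \<in> ?B")
      case True then show ?thesis by (auto simp: HH_def intro!: prod.neutral[symmetric])
    next
      case False
      then obtain j where "j \<in> J" "eta j w \<noteq> -1" using w by auto
      then show ?thesis using False assms by (auto simp: HH_def intro!: prod_zero[symmetric] bexI[of _ j])
    qed
  qed simp
  also have "\<dots> = rh ^ card J" using prod_expect(1)[OF assms, of "{}"] by simp
  finally show ?thesis .
qed

lemma sep_lb: "\<exists>\<delta>>0. \<forall>v. prob {w \<in> space M. separator (\<lambda>j. eta j w) v} \<ge> \<delta>"
proof -
  obtain N :: nat where N: "4 * ff / (1 - ff) < lam ^ N"
    using real_arch_pow[OF lam_gt1] by blast
  have lamN: "0 < lam ^ N" using lam_gt1 by simp
  define c where "c = rh ^ (2*N+1) / lam ^ N"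
  have c_nn: "0 \<le> c" unfolding c_def using rh_pos lamN by simp
  have ffq: "0 < ff / (1 - ff)" using ff_pos ff_lt1 by simp
  have small: "2 * (c * (ff / (1 - ff))) \<le> rh ^ (2*N+1) / 2"
  proof -
    have "2 * (c * (ff / (1 - ff))) = rh ^ (2*N+1) * (2 * ff / (1 - ff) / lam ^ N)"
      unfolding c_def by (simp add: field_simps)
    also have "2 * ff / (1 - ff) / lam ^ N \<le> 1/2"
      using N lamN ff_lt1 by (simp add: field_simps)
    then have "rh ^ (2*N+1) * (2 * ff / (1 - ff) / lam ^ N) \<le> rh ^ (2*N+1) * (1/2)"
      using rh_pos by (intro mult_left_mono) auto
    finally show ?thesis by simp
  qed
  have geo: "summable (\<lambda>k. c * ff ^ (k+1))" "(\<Sum>k. c * ff ^ (k+1)) = c * (ff / (1 - ff))"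
  proof -
    have g: "summable (\<lambda>k. ff ^ k)" using ff_pos ff_lt1 by (intro summable_geometric) simp
    have s: "(\<lambda>k. c * ff ^ (k+1)) = (\<lambda>k. (c * ff) * ff ^ k)" by (simp add: field_simps)
    show "summable (\<lambda>k. c * ff ^ (k+1))" unfolding s by (intro summable_mult g)
    have "(\<Sum>k. (c * ff) * ff ^ k) = (c * ff) * (1 / (1 - ff))"
      using ff_pos ff_lt1 by (subst suminf_mult[OF g]) (simp add: suminf_geometric)
    then show "(\<Sum>k. c * ff ^ (k+1)) = c * (ff / (1 - ff))" unfolding s by simp
  qed
  have bound: "prob (\<Union>k. A k) \<le> c * (ff / (1 - ff))"
    if Ameas: "\<And>k. A k \<in> sets M" and Ale: "\<And>k. prob (A k) \<le> c * ff ^ (k+1)" for A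
  proof -
    have sA: "summable (\<lambda>k. prob (A k))"
      by (rule summable_comparison_test[OF _ geo(1)]) (use Ale in auto)
    have "prob (\<Union>k. A k) \<le> (\<Sum>k. prob (A k))"
      by (rule finite_measure_subadditive_countably) (use Ameas sA in auto)
    also have "\<dots> \<le> (\<Sum>k. c * ff ^ (k+1))"
      by (rule suminf_le[OF Ale sA geo(1)])
    finally show ?thesis using geo(2) by simp
  qed
  show ?thesis
  proof (intro exI[of _ "rh ^ (2*N+1) / 2"] conjI allI)
    show "0 < rh ^ (2*N+1) / 2" using rh_pos by simp
    fix v :: int
    define J where "J = {v - int N .. v + int N}"
    have cardJ: "card J = 2*N+1" unfolding J_def by simp
    define B where "B = {w \<in> space M. \<forall>j\<in>J. eta j w = -1}"
    define R where "R k = {w \<in> space M. (\<forall>j\<in>J. eta j w = -1) \<and>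
        (\<Sum>i\<in>{v + int N + 1 .. v + int N + 1 + int k}. eta i w) > int N}" for k :: nat
    define L where "L k = {w \<in> space M. (\<forall>j\<in>J. eta j w = -1) \<and>
        (\<Sum>i\<in>{v - int N - 1 - int k .. v - int N - 1}. eta i w) > int N}" for k :: nat
    define S where "S = {w \<in> space M. separator (\<lambda>j. eta j w) v}"
    have Rm: "R k \<in> sets M" for k unfolding R_def J_def by measurable
    have Lm: "L k \<in> sets M" for k unfolding L_def J_def by measurable
    have Bm: "B \<in> sets M" unfolding B_def J_def by measurable
    have Sm: "S \<in> sets M" unfolding S_def by measurable
    have PR: "prob (R k) \<le> c * ff ^ (k+1)" for k
    proof -
      have "prob (R k) \<le> rh ^ card J * ff ^ card {v + int N + 1 .. v + int N + 1 + int k} / lam ^ N"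
        unfolding R_def by (rule key) (auto simp: J_def)
      also have "card {v + int N + 1 .. v + int N + 1 + int k} = k + 1" by simp
      then have "rh ^ card J * ff ^ card {v + int N + 1 .. v + int N + 1 + int k} / lam ^ N = c * ff ^ (k+1)"
        unfolding c_def cardJ by simp
      finally show ?thesis .
    qed
    have PL: "prob (L k) \<le> c * ff ^ (k+1)" for k
    proof -
      have "prob (L k) \<le> rh ^ card J * ff ^ card {v - int N - 1 - int k .. v - int N - 1} / lam ^ N"
        unfolding L_def by (rule key) (auto simp: J_def)
      also have "card {v - int N - 1 - int k .. v - int N - 1} = k + 1" by simp
      then have "rh ^ card J * ff ^ card {v - int N - 1 - int k .. v - int N - 1} / lam ^ N = c * ff ^ (k+1)"
        unfolding c_def cardJ by simp
      finally show ?thesis .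
    qed
    have incl: "B \<subseteq> S \<union> ((\<Union>k. R k) \<union> (\<Union>k. L k))"
    proof
      fix w assume wB: "w \<in> B"
      then have w: "w \<in> space M" and allJ: "\<forall>j\<in>J. eta j w = -1" unfolding B_def by auto
      show "w \<in> S \<union> ((\<Union>k. R k) \<union> (\<Union>k. L k))"
      proof (cases "w \<in> S")
        case True then show ?thesis by simp
      next
        case False
        have ev: "eta v w = -1" using allJ by (auto simp: J_def)
        from False w ev have "(\<exists>k<v. (\<Sum>j=k..v-1. eta j w) > 0) \<or> (\<exists>k>v. (\<Sum>j=v+1..k. eta j w) > 0)"
          unfolding S_def separator_def by force
        then show ?thesis
        proof
          assume "\<exists>k<v. (\<Sum>j=k..v-1. eta j w) > 0"
          then obtain k where k: "k < v" "(\<Sum>j=k..v-1. eta j w) > 0" by blast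
          show ?thesis
          proof (cases "k \<ge> v - int N")
            case True
            then have "(\<Sum>j=k..v-1. eta j w) = k - (v - 1) - 1"
              using allJ k by (intro sum_const_m1) (auto simp: J_def)
            then show ?thesis using k by simp
          next
            case False
            have "(\<Sum>j=k..v-1. eta j w) = (\<Sum>j=k..v - int N - 1. eta j w) + (\<Sum>j=v - int N - 1 + 1..v-1. eta j w)"
              using False k by (intro sum_split_int) auto
            also have "(\<Sum>j=v - int N - 1 + 1..v-1. eta j w) = (v - int N - 1 + 1) - (v - 1) - 1"
              using allJ by (intro sum_const_m1) (auto simp: J_def)
            finally have "(\<Sum>j=k..v - int N - 1. eta j w) > int N" using k by simp
            moreover have "v - int N - 1 - int (nat (v - int N - 1 - k)) = k" using False by simp
            ultimately have "w \<in> L (nat (v - int N - 1 - k))"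
              unfolding L_def using w allJ by simp
            then show ?thesis by blast
          qed
        next
          assume "\<exists>k>v. (\<Sum>j=v+1..k. eta j w) > 0"
          then obtain k where k: "k > v" "(\<Sum>j=v+1..k. eta j w) > 0" by blast
          show ?thesis
          proof (cases "k \<le> v + int N")
            case True
            then have "(\<Sum>j=v+1..k. eta j w) = (v + 1) - k - 1"
              using allJ k by (intro sum_const_m1) (auto simp: J_def)
            then show ?thesis using k by simp
          next
            case False
            have "(\<Sum>j=v+1..k. eta j w) = (\<Sum>j=v+1..v + int N. eta j w) + (\<Sum>j=v + int N + 1..k. eta j w)"
              using False k by (intro sum_split_int) auto
            also have "(\<Sum>j=v+1..v + int N. eta j w) = (v + 1) - (v + int N) - 1"
              using allJ by (intro sum_const_m1) (auto simp: J_def)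
            finally have "(\<Sum>j=v + int N + 1..k. eta j w) > int N" using k by simp
            moreover have "v + int N + 1 + int (nat (k - v - int N - 1)) = k" using False by simp
            ultimately have "w \<in> R (nat (k - v - int N - 1))"
              unfolding R_def using w allJ by simp
            then show ?thesis by blast
          qed
        qed
      qed
    qed
    have "rh ^ (2*N+1) = prob B" unfolding B_def using probB[of J] cardJ by (simp add: J_def)
    also have "\<dots> \<le> prob (S \<union> ((\<Union>k. R k) \<union> (\<Union>k. L k)))"
      using incl Rm Lm Sm by (intro finite_measure_mono) auto
    also have "\<dots> \<le> prob S + (prob (\<Union>k. R k) + prob (\<Union>k. L k))"
    proof -
      have RUm: "(\<Union>k. R k) \<in> sets M" using Rm by (intro sets.countable_UN) auto
      have LUm: "(\<Union>k. L k) \<in> sets M" using Lm by (intro sets.countable_UN) auto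
      have "prob (S \<union> ((\<Union>k. R k) \<union> (\<Union>k. L k))) \<le> prob S + prob ((\<Union>k. R k) \<union> (\<Union>k. L k))"
        using RUm LUm Sm by (intro measure_Un_le) auto
      also have "prob ((\<Union>k. R k) \<union> (\<Union>k. L k)) \<le> prob (\<Union>k. R k) + prob (\<Union>k. L k)"
        using RUm LUm by (intro measure_Un_le) auto
      finally show ?thesis by simp
    qed
    also have "\<dots> \<le> prob S + (c * (ff / (1 - ff)) + c * (ff / (1 - ff)))"
      using bound[OF Rm PR] bound[OF Lm PL] by simp
    finally show "rh ^ (2*N+1) / 2 \<le> prob {w \<in> space M. separator (\<lambda>j. eta j w) v}"
      using small unfolding S_def by simp
  qed
qed

end


lemma unb_infinite:
  fixes S :: "int set"
  assumes "\<forall>K. \<exists>v\<in>S. v > K"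
  shows "infinite S"
proof
  assume fin: "finite S"
  obtain v where v: "v \<in> S" "v > Max (insert 0 S)" using assms by blast
  have "v \<le> Max (insert 0 S)" using fin v by simp
  then show False using v by simp
qed

lemma infinite_unb:
  fixes S :: "int set"
  assumes "S \<subseteq> {n<..}" "infinite S"
  shows "\<exists>v\<in>S. v > K"
proof (rule ccontr)
  assume "\<not> ?thesis"
  then have "S \<subseteq> {n<..K}" using assms(1) by force
  then show False using assms(2) finite_subset by blast
qed

lemma sum_split_int2:
  fixes f :: "int \<Rightarrow> 'a::comm_monoid_add"
  assumes "a \<le> m" "m \<le> b + 1"
  shows "(\<Sum>j=a..b. f j) = (\<Sum>j=a..m-1. f j) + (\<Sum>j=m..b. f j)"
  using sum_split_int[of a "m-1" b f] assms by simp

definition nsep :: "(int \<Rightarrow> int) \<Rightarrow> int \<Rightarrow> int \<Rightarrow> bool" where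
  "nsep e n v \<longleftrightarrow> e v = -1 \<and> (\<forall>k. n \<le> k \<and> k < v \<longrightarrow> (\<Sum>j=k..v-1. e j) \<le> 0) \<and>
     (\<forall>k>v. (\<Sum>j=v+1..k. e j) \<le> 0)"

lemma nsep_meas:
  assumes "\<And>j. X j \<in> measurable Mg (count_space UNIV)"
  shows "{w \<in> space Mg. \<forall>K::int. \<exists>v>K. v > n \<and> nsep (\<lambda>j. X j w) n v} \<in> sets Mg"
proof -
  note assms[measurable] int_sum_meas[OF assms, measurable]
  show ?thesis unfolding nsep_def by measurable
qed

lemma nsep_cong:
  assumes "\<And>j. j \<ge> n \<Longrightarrow> e j = e' j" "v \<ge> n"
  shows "nsep e n v = nsep e' n v"
proof -
  have a: "(\<Sum>j=k..v-1. e j) = (\<Sum>j=k..v-1. e' j)" if "n \<le> k" for k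
    using assms that by (intro sum.cong) auto
  have b: "(\<Sum>j=v+1..k. e j) = (\<Sum>j=v+1..k. e' j)" for k
    using assms by (intro sum.cong) auto
  show ?thesis unfolding nsep_def using a b assms by auto
qed

lemma sep_nsep: "separator e v \<Longrightarrow> nsep e n v"
  unfolding separator_def nsep_def by auto

lemma nsep_mono: "nsep e n v \<Longrightarrow> n \<le> n' \<Longrightarrow> nsep e n' v"
  unfolding nsep_def by auto

lemma nsep_decr:
  assumes "nsep e n v" "nsep e n v'" "n < v" "v < v'"
  shows "(\<Sum>j=n..v'-1. e j) \<le> (\<Sum>j=n..v-1. e j) - 1"
proof -
  have "(\<Sum>j=n..v'-1. e j) = (\<Sum>j=n..v-1. e j) + (\<Sum>j=v..v'-1. e j)"
    using assms by (intro sum_split_int2) auto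
  also have "(\<Sum>j=v..v'-1. e j) = (\<Sum>j=v..v. e j) + (\<Sum>j=v+1..v'-1. e j)"
    using assms by (intro sum_split_int) auto
  also have "(\<Sum>j=v+1..v'-1. e j) \<le> 0"
  proof (cases "v + 1 \<le> v' - 1")
    case True then show ?thesis using assms(1) unfolding nsep_def by auto
  next
    case False then show ?thesis by simp
  qed
  finally show ?thesis using assms(1) unfolding nsep_def by simp
qed

lemma nsep_to_sep:
  fixes e :: "int \<Rightarrow> int" and n :: int
  assumes C: "\<forall>k<n. (\<Sum>j=k..n-1. e j) \<le> C"
    and unb: "\<forall>K. \<exists>v>K. v > n \<and> nsep e n v"
  shows "\<exists>v>K. separator e v"
proof -
  obtain v0 where v0: "v0 > K" "v0 > n" "nsep e n v0" using unb by blast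
  let ?T = "\<lambda>v. (\<Sum>j=n..v-1. e j)"
  have desc: "\<exists>v\<ge>v0. v > n \<and> nsep e n v \<and> ?T v \<le> ?T v0 - int d" for d :: nat
  proof (induction d)
    case 0 then show ?case using v0 by auto
  next
    case (Suc d)
    then obtain v where v: "v \<ge> v0" "v > n" "nsep e n v" "?T v \<le> ?T v0 - int d" by blast
    obtain v' where v': "v' > v" "v' > n" "nsep e n v'" using unb by blast
    have "?T v' \<le> ?T v - 1" by (rule nsep_decr[OF v(3) v'(3) v(2) v'(1)])
    then show ?case using v v' by (intro exI[of _ v']) auto
  qed
  obtain v where v: "v \<ge> v0" "v > n" "nsep e n v" "?T v \<le> ?T v0 - int (nat (?T v0 + C))"
    using desc by blast
  have Tv: "?T v \<le> - C" using v(4) by linarith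
  have "separator e v" unfolding separator_def
  proof (intro conjI allI impI)
    show "e v = -1" using v(3) unfolding nsep_def by auto
    fix k assume "k < v"
    show "(\<Sum>j=k..v-1. e j) \<le> 0"
    proof (cases "n \<le> k")
      case True then show ?thesis using v(3) \<open>k < v\<close> unfolding nsep_def by auto
    next
      case False
      have "(\<Sum>j=k..v-1. e j) = (\<Sum>j=k..n-1. e j) + ?T v"
        using False v(2) by (subst sum_split_int[of k "n-1"]) auto
      moreover have "(\<Sum>j=k..n-1. e j) \<le> C" using C False by auto
      ultimately show ?thesis using Tv by linarith
    qed
  next
    fix k assume "k > v"
    then show "(\<Sum>j=v+1..k. e j) \<le> 0" using v(3) unfolding nsep_def by auto
  qed
  then show ?thesis using v v0 by (intro exI[of _ v]) auto
qed

lemma (in prob_space) indep_sets_reindex: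
  assumes "indep_sets F UNIV" "inj g"
  shows "indep_sets (\<lambda>i. F (g i)) UNIV"
  unfolding indep_sets_def
proof (intro conjI ballI allI impI)
  fix i show "F (g i) \<subseteq> events" using assms(1) unfolding indep_sets_def by auto
next
  fix J A assume J: "J \<subseteq> UNIV" "J \<noteq> {}" "finite J" and A: "A \<in> Pi J (\<lambda>i. F (g i))"
  define A' where "A' k = A (inv g k)" for k
  have A'g: "A' (g j) = A j" for j unfolding A'_def using assms(2) by simp
  have A'Pi: "A' \<in> Pi (g ` J) F" using A by (auto simp: A'g)
  have all: "\<forall>J'. J' \<subseteq> UNIV \<longrightarrow> J' \<noteq> {} \<longrightarrow> finite J' \<longrightarrow> (\<forall>B\<in>Pi J' F. prob (\<Inter>j\<in>J'. B j) = (\<Prod>j\<in>J'. prob (B j)))"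
    using assms(1) unfolding indep_sets_def by blast
  have "prob (\<Inter>k\<in>g ` J. A' k) = (\<Prod>k\<in>g ` J. prob (A' k))"
    using all[rule_format, of "g ` J" A'] J A'Pi by auto
  moreover have "(\<Inter>k\<in>g ` J. A' k) = (\<Inter>j\<in>J. A j)" by (auto simp: A'g)
  moreover have "(\<Prod>k\<in>g ` J. prob (A' k)) = (\<Prod>j\<in>J. prob (A j))"
    using assms(2) by (subst prod.reindex) (auto simp: A'g inj_on_def)
  ultimately show "prob (\<Inter>j\<in>J. A j) = (\<Prod>j\<in>J. prob (A j))" by simp
qed



context sepsetup
begin

definition Rp where "Rp = {w \<in> space M. \<forall>K. \<exists>v>K. v > 0 \<and> separator (\<lambda>j. eta j w) v}"

lemma Rp_meas[measurable]: "Rp \<in> sets M"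
  unfolding Rp_def separator_def by measurable

lemma Rp_lb: "\<exists>\<delta>>0. prob Rp \<ge> \<delta>"
proof -
  obtain \<delta> where d: "\<delta> > 0" "\<And>v. prob {w \<in> space M. separator (\<lambda>j. eta j w) v} \<ge> \<delta>"
    using sep_lb by blast
  define U where "U n = {w \<in> space M. \<exists>v. v > int n \<and> separator (\<lambda>j. eta j w) v}" for n :: nat
  have Um: "U n \<in> sets M" for n unfolding U_def separator_def by measurable
  have dec: "decseq U" unfolding decseq_def U_def by force
  have "(\<lambda>n. prob (U n)) \<longlonglongrightarrow> prob (\<Inter>n. U n)"
    by (rule finite_Lim_measure_decseq) (use Um dec in auto)
  moreover have "prob (U n) \<ge> \<delta>" for n
  proof -
    have "{w \<in> space M. separator (\<lambda>j. eta j w) (int n + 1)} \<subseteq> U n" unfolding U_def by force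
    then have "prob {w \<in> space M. separator (\<lambda>j. eta j w) (int n + 1)} \<le> prob (U n)"
      using Um by (intro finite_measure_mono) auto
    then show ?thesis using d(2)[of "int n + 1"] by linarith
  qed
  ultimately have "\<delta> \<le> prob (\<Inter>n. U n)" by (intro LIMSEQ_le_const) auto
  also have "(\<Inter>n. U n) \<subseteq> Rp"
  proof
    fix w assume w: "w \<in> (\<Inter>n. U n)"
    then have "w \<in> space M" unfolding U_def by auto
    moreover have "\<exists>v>K. v > 0 \<and> separator (\<lambda>j. eta j w) v" for K
    proof -
      from w have "w \<in> U (nat (max K 0))" by auto
      then obtain v where "v > int (nat (max K 0))" "separator (\<lambda>j. eta j w) v" unfolding U_def by auto
      then show ?thesis by (intro exI[of _ v]) auto
    qed
    ultimately show "w \<in> Rp" unfolding Rp_def by auto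
  qed
  then have "prob (\<Inter>n. U n) \<le> prob Rp" by (intro finite_measure_mono) auto
  finally show ?thesis using d(1) by blast
qed

lemma omega0: "AE w in M. \<forall>n::int. \<exists>C. \<forall>k<n. (\<Sum>j=k..n-1. eta j w) \<le> C"
proof -
  have "AE w in M. \<exists>C. \<forall>k<n. (\<Sum>j=k..n-1. eta j w) \<le> C" for n :: int
  proof -
    define A where "A m = {w \<in> space M. (\<Sum>j\<in>{n - 1 - int m..n-1}. eta j w) > int 0}" for m :: nat
    have Am: "A m \<in> sets M" for m unfolding A_def by measurable
    have PA: "prob (A m) \<le> ff ^ (m+1)" for m
    proof -
      have "prob (A m) \<le> rh ^ card {} * ff ^ card {n - 1 - int m..n-1} / lam ^ 0"
        unfolding A_def using key[of "{}" "{n - 1 - int m..n-1}" 0] by simp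
      also have "card {n - 1 - int m..n-1} = m + 1" by simp
      finally show ?thesis by simp
    qed
    have g: "summable (\<lambda>m. ff ^ (m+1))"
    proof -
      have "summable (\<lambda>m. ff * ff ^ m)" using ff_pos ff_lt1 by (intro summable_mult summable_geometric) simp
      then show ?thesis by simp
    qed
    have sA: "summable (\<lambda>m. measure M (A m))"
      by (rule summable_comparison_test[OF _ g]) (use PA in auto)
    have "AE w in M. eventually (\<lambda>m. w \<in> space M - A m) sequentially"
      by (rule borel_cantelli_AE1) (use Am sA in \<open>auto simp: less_top[symmetric]\<close>)
    then show ?thesis
    proof eventually_elim
      case (elim w)
      then obtain M0 where M0: "\<And>m. m \<ge> M0 \<Longrightarrow> w \<in> space M - A m"
        unfolding eventually_sequentially by blast
      define C where "C = (\<Sum>m<M0. \<bar>\<Sum>j\<in>{n - 1 - int m..n-1}. eta j w\<bar>)"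
      have "(\<Sum>j=k..n-1. eta j w) \<le> C" if "k < n" for k
      proof -
        define m where "m = nat (n - 1 - k)"
        have km: "k = n - 1 - int m" unfolding m_def using that by simp
        show ?thesis
        proof (cases "m \<ge> M0")
          case True
          then have "w \<notin> A m" using M0 by auto
          moreover have "w \<in> space M" using M0 by auto
          ultimately have "(\<Sum>j=k..n-1. eta j w) \<le> 0" unfolding A_def km by auto
          moreover have "0 \<le> C" unfolding C_def by (intro sum_nonneg) auto
          ultimately show ?thesis by linarith
        next
          case False
          have "(\<Sum>j=k..n-1. eta j w) \<le> \<bar>\<Sum>j\<in>{n - 1 - int m..n-1}. eta j w\<bar>" unfolding km by simp
          also have "\<dots> \<le> C" unfolding C_def using False
            by (intro member_le_sum[where f="\<lambda>m. \<bar>\<Sum>j\<in>{n - 1 - int m..n-1}. eta j w\<bar>"]) auto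
          finally show ?thesis .
        qed
      qed
      then show ?case by blast
    qed
  qed
  then show ?thesis by (simp add: AE_all_countable)
qed

end


context sepsetup
begin

definition Rn where "Rn n = {w \<in> space M. \<forall>K. \<exists>v>K. v > n \<and> nsep (\<lambda>j. eta j w) n v}"

lemma Rn_meas[measurable]: "Rn n \<in> sets M"
  unfolding Rn_def by (rule nsep_meas[OF eta_meas])

lemma Rn_mono: "n \<le> n' \<Longrightarrow> Rn n \<subseteq> Rn n'"
proof
  fix w assume nn: "n \<le> n'" and w: "w \<in> Rn n"
  have "\<exists>v>K. v > n' \<and> nsep (\<lambda>j. eta j w) n' v" for K
  proof -
    obtain v where "v > max K n'" "v > n" "nsep (\<lambda>j. eta j w) n v" using w unfolding Rn_def by blast
    then show ?thesis using nn by (intro exI[of _ v]) (auto intro: nsep_mono)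
  qed
  then show "w \<in> Rn n'" using w unfolding Rn_def by auto
qed

definition Rstar where "Rstar = (\<Union>m::nat. Rn (int m))"

lemma Rstar_meas[measurable]: "Rstar \<in> sets M"
  unfolding Rstar_def by (intro sets.countable_UN) auto

lemma AE_Rp_Rstar: "AE w in M. (w \<in> Rp) = (w \<in> Rstar)"
  using omega0
proof eventually_elim
  case (elim w)
  show ?case
  proof
    assume w: "w \<in> Rp"
    have "\<exists>v>K. v > 0 \<and> nsep (\<lambda>j. eta j w) 0 v" for K
      using w unfolding Rp_def by (blast intro: sep_nsep)
    then have "w \<in> Rn (int 0)" using w unfolding Rn_def Rp_def by auto
    then show "w \<in> Rstar" unfolding Rstar_def by blast
  next
    assume "w \<in> Rstar"
    then obtain m where w: "w \<in> Rn (int m)" unfolding Rstar_def by blast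
    obtain C where C: "\<forall>k<int m. (\<Sum>j=k..int m-1. eta j w) \<le> C" using elim by blast
    have unb: "\<forall>K. \<exists>v>K. v > int m \<and> nsep (\<lambda>j. eta j w) (int m) v" using w unfolding Rn_def by auto
    have "\<exists>v>K. v > 0 \<and> separator (\<lambda>j. eta j w) v" for K
    proof -
      obtain v where "v > max K 0" "separator (\<lambda>j. eta j w) v"
        using nsep_to_sep[OF C unb, of "max K 0"] by blast
      then show ?thesis by (intro exI[of _ v]) auto
    qed
    then show "w \<in> Rp" using w unfolding Rp_def Rn_def by auto
  qed
qed

definition AA where "AA i = {eta (int_decode i) -` B \<inter> space M | B. B \<in> sets (count_space UNIV)}"

lemma AA_sigma: "sigma_algebra (space M) (AA i)"
proof -
  have "AA i = sets (vimage_algebra (space M) (eta (int_decode i)) (count_space UNIV))"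
    by (subst sets_vimage_algebra2) (auto simp: AA_def)
  then show ?thesis
    using sets.sigma_algebra_axioms[of "vimage_algebra (space M) (eta (int_decode i)) (count_space UNIV)"]
    by (simp add: space_vimage_algebra)
qed

lemma AA_indep: "indep_sets AA UNIV"
proof -
  have "indep_sets (\<lambda>j. {eta j -` B \<inter> space M | B. B \<in> sets (count_space UNIV)}) UNIV"
    using ind unfolding indep_vars_def2 by auto
  from indep_sets_reindex[OF this, of int_decode] show ?thesis
    unfolding AA_def using inj_int_decode by auto
qed

lemma int_encode_ge: "j \<ge> 0 \<Longrightarrow> int_encode j = 2 * nat j"
  by (simp add: int_encode_def sum_encode_def)

lemma Rn_tail:
  assumes "n \<ge> int N0"
  shows "Rn n \<in> sigma_sets (space M) (\<Union> (AA ` {N0..}))"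
proof -
  let ?G = "\<Union> (AA ` {N0..})"
  have Gsub: "?G \<subseteq> Pow (space M)" unfolding AA_def by auto
  define Mg where "Mg = sigma (space M) ?G"
  have sMg: "sets Mg = sigma_sets (space M) ?G" unfolding Mg_def using Gsub by (rule sets_measure_of)
  have spMg: "space Mg = space M" unfolding Mg_def using Gsub by (rule space_measure_of)
  define X where "X j = eta (max j n)" for j
  have Xm: "X j \<in> measurable Mg (count_space UNIV)" for j
  proof (rule measurableI)
    fix B :: "int set" assume "B \<in> sets (count_space UNIV)"
    define j' where "j' = max j n"
    have j'0: "j' \<ge> int N0" unfolding j'_def using assms by auto
    then have "int_encode j' \<ge> N0" using int_encode_ge[of j'] by auto
    moreover have "X j -` B \<inter> space Mg \<in> AA (int_encode j')"
      unfolding AA_def X_def j'_def spMg by auto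
    ultimately have "X j -` B \<inter> space Mg \<in> ?G" by blast
    then show "X j -` B \<inter> space Mg \<in> sets Mg" unfolding sMg by (rule sigma_sets.Basic)
  qed auto
  have "{w \<in> space Mg. \<forall>K. \<exists>v>K. v > n \<and> nsep (\<lambda>j. X j w) n v} \<in> sets Mg"
    by (rule nsep_meas[OF Xm])
  moreover have "{w \<in> space Mg. \<forall>K. \<exists>v>K. v > n \<and> nsep (\<lambda>j. X j w) n v} = Rn n"
  proof -
    have e1: "nsep (\<lambda>j. X j w) n v = nsep (\<lambda>j. eta j w) n v" if "v > n" for w v
      using that by (intro nsep_cong) (auto simp: X_def max_def)
    have eqv: "(K < v \<and> n < v \<and> nsep (\<lambda>j. X j w) n v) = (K < v \<and> n < v \<and> nsep (\<lambda>j. eta j w) n v)" for w v K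
      using e1[of v w] by blast
    show ?thesis unfolding Rn_def spMg by (simp only: eqv)
  qed
  ultimately show ?thesis using sMg by simp
qed

lemma Rstar_tail: "Rstar \<in> tail_events AA"
  unfolding tail_events_def
proof (intro InterI, safe)
  fix N0 :: nat
  have "Rstar = (\<Union>i. Rn (int (N0 + i)))"
  proof
    show "Rstar \<subseteq> (\<Union>i. Rn (int (N0 + i)))"
    proof
      fix w assume "w \<in> Rstar"
      then obtain m where "w \<in> Rn (int m)" unfolding Rstar_def by blast
      then have "w \<in> Rn (int (N0 + m))" using Rn_mono[of "int m" "int (N0 + m)"] by auto
      then show "w \<in> (\<Union>i. Rn (int (N0 + i)))" by blast
    qed
    show "(\<Union>i. Rn (int (N0 + i))) \<subseteq> Rstar"
    proof
      fix w assume "w \<in> (\<Union>i. Rn (int (N0 + i)))"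
      then obtain i where "w \<in> Rn (int (N0 + i))" by blast
      then show "w \<in> Rstar" unfolding Rstar_def by blast
    qed
  qed
  also have "\<dots> \<in> sigma_sets (space M) (\<Union> (AA ` {N0..}))"
    by (intro sigma_sets.Union Rn_tail) auto
  finally show "Rstar \<in> sigma_sets (space M) (\<Union> (AA ` {N0..}))" .
qed

lemma right_AE: "AE w in M. infinite {v. v > 0 \<and> separator (\<lambda>j. eta j w) v}"
proof -
  have "prob Rstar = 0 \<or> prob Rstar = 1"
    by (rule kolmogorov_0_1_law[OF AA_sigma AA_indep Rstar_tail])
  moreover have "prob Rp = prob Rstar"
    by (rule measure_eq_AE[OF AE_Rp_Rstar]) auto
  moreover obtain \<delta> where "\<delta> > 0" "prob Rp \<ge> \<delta>" using Rp_lb by blast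
  ultimately have "prob Rp = 1" by auto
  then have "AE w in M. w \<in> Rp" by (rule AE_prob_1)
  then show ?thesis
  proof eventually_elim
    case (elim w)
    then show ?case unfolding Rp_def by (intro unb_infinite) auto
  qed
qed

end


lemma sum_neg_int:
  fixes a b :: int and e :: "int \<Rightarrow> int"
  shows "(\<Sum>j=a..b. e (-j)) = (\<Sum>i=-b..-a. e i)"
proof -
  have "(\<Sum>i\<in>uminus ` {a..b}. e i) = (\<Sum>j=a..b. e (-j))"
    by (subst sum.reindex) (auto simp: inj_on_def)
  then show ?thesis by (simp add: image_uminus_atLeastAtMost)
qed

lemma sep_refl: fixes e :: "int \<Rightarrow> int" shows "separator (\<lambda>j. e (-j)) v \<longleftrightarrow> separator e (-v)"
proof -
  have A: "(\<forall>k<v. (\<Sum>i=-(v-1)..-k. e i) \<le> 0) \<longleftrightarrow> (\<forall>k>-v. (\<Sum>j=-v+1..k. e j) \<le> 0)"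
  proof
    assume H: "\<forall>k<v. (\<Sum>i=-(v-1)..-k. e i) \<le> 0"
    show "\<forall>k>-v. (\<Sum>j=-v+1..k. e j) \<le> 0"
    proof (intro allI impI)
      fix k assume "k > -v"
      then have "(\<Sum>i=-(v-1)..-(-k). e i) \<le> 0" using H[rule_format, of "-k"] by linarith
      then show "(\<Sum>j=-v+1..k. e j) \<le> 0" by simp
    qed
  next
    assume H: "\<forall>k>-v. (\<Sum>j=-v+1..k. e j) \<le> 0"
    show "\<forall>k<v. (\<Sum>i=-(v-1)..-k. e i) \<le> 0"
    proof (intro allI impI)
      fix k assume "k < v"
      then have "(\<Sum>j=-v+1..-k. e j) \<le> 0" using H[rule_format, of "-k"] by linarith
      then show "(\<Sum>i=-(v-1)..-k. e i) \<le> 0" by simp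
    qed
  qed
  have B: "(\<forall>k>v. (\<Sum>i=-k..-(v+1). e i) \<le> 0) \<longleftrightarrow> (\<forall>k < - v. (\<Sum>j=k..-v-1. e j) \<le> 0)"
  proof
    assume H: "\<forall>k>v. (\<Sum>i=-k..-(v+1). e i) \<le> 0"
    show "\<forall>k < - v. (\<Sum>j=k..-v-1. e j) \<le> 0"
    proof (intro allI impI)
      fix k assume "k < -v"
      then have "(\<Sum>i=-(-k)..-(v+1). e i) \<le> 0" using H[rule_format, of "-k"] by linarith
      then show "(\<Sum>j=k..-v-1. e j) \<le> 0" by simp
    qed
  next
    assume H: "\<forall>k < - v. (\<Sum>j=k..-v-1. e j) \<le> 0"
    show "\<forall>k>v. (\<Sum>i=-k..-(v+1). e i) \<le> 0"
    proof (intro allI impI)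
      fix k assume "k > v"
      then have "(\<Sum>j=-k..-v-1. e j) \<le> 0" using H[rule_format, of "-k"] by linarith
      then show "(\<Sum>i=-k..-(v+1). e i) \<le> 0" by simp
    qed
  qed
  show ?thesis unfolding separator_def sum_neg_int using A B by auto
qed

lemma left_from_right:
  assumes "infinite {v. v > 0 \<and> separator (\<lambda>j. e (-j)) v}"
  shows "infinite {v. v < 0 \<and> separator e v}"
proof -
  have "{v. v > 0 \<and> separator (\<lambda>j. e (-j)) v} = uminus ` {v. v < 0 \<and> separator e v}"
    by (auto simp: sep_refl image_iff intro!: exI[of _ "- _"])
  then show ?thesis using assms by (metis finite_imageI)
qed

theorem mainTheorem17:
  fixes M :: "'w measure" and eta :: "int \<Rightarrow> 'w \<Rightarrow> int" and rb rh :: real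
  assumes "prob_space M"
    and "rb < rh" and "rb + rh \<le> 1"
    and "prob_space.indep_vars M (\<lambda>_. count_space UNIV) eta UNIV"
    and "\<And>x. measure M {w \<in> space M. eta x w = 1} = rb"
    and "\<And>x. measure M {w \<in> space M. eta x w = -1} = rh"
    and "\<And>x. measure M {w \<in> space M. eta x w = 0} = 1 - rb - rh"
  shows "AE w in M. infinite {v. v > 0 \<and> separator (\<lambda>j. eta j w) v}
                  \<and> infinite {v. v < 0 \<and> separator (\<lambda>j. eta j w) v}"
proof -
  interpret P: prob_space M by fact
  interpret S1: sepsetup M eta rb rh
    by unfold_locales (use assms in auto)
  have ind2: "P.indep_vars (\<lambda>_. count_space UNIV) (\<lambda>j. eta (-j)) UNIV"
  proof -
    have m: "\<forall>i\<in>UNIV. (\<lambda>w. eta (-i) w) \<in> measurable M (count_space UNIV)"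
      using S1.eta_meas by blast
    have isd: "P.indep_sets (\<lambda>i. {eta i -` A \<inter> space M | A. A \<in> sets (count_space UNIV)}) UNIV"
      using S1.ind unfolding P.indep_vars_def2 by auto
    have "P.indep_sets (\<lambda>i. {eta (-i) -` A \<inter> space M | A. A \<in> sets (count_space UNIV)}) UNIV"
      using P.indep_sets_reindex[OF isd, of uminus] by (simp add: inj_def)
    then show ?thesis using m unfolding P.indep_vars_def2 by auto
  qed
  interpret S2: sepsetup M "\<lambda>j. eta (-j)" rb rh
    by unfold_locales (use assms ind2 in auto)
  show ?thesis
    using S1.right_AE S2.right_AE
  proof eventually_elim
    case (elim w)
    then show ?case using left_from_right[of "\<lambda>j. eta j w"] by auto
  qed
qed

end
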